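(* Let $\mathcal{H}$ be a hypertree, $T$ a host tree of $\mathcal{H}$, and $B$ a basic set of $\mathcal{H}$. Then the number of edges $e$ of $T$ with $I_\mathcal{H}(e)=B$ equals $\alpha_B-1$.
   Context: A hypergraph $\mathcal{H}$ has a finite vertex set $V(\mathcal{H})$ and a finite family of nonempty subsets (edges). A host tree is a tree on $V(\mathcal{H})$ in which every edge induces a connected subgraph; a hypertree is a hypergraph with a host tree. For $V'\subseteq V(\mathcal{H})$, $I_\mathcal{H}(V')$ is the intersection of all edges containing $V'$, or $V(\mathcal{H})$ if none does; for a tree edge $e=xy$, $I_\mathcal{H}(e)=I_\mathcal{H}(\{x,y\})$. For $A\subseteq V(\mathcal{H})$, $\overline{\mathcal{H}_A}$ is the hypergraph on $V(\mathcal{H})$ whose edges are the edges of $\mathcal{H}$ not containing $A$. The 2-section of a hypergraph is the graph on its vertices where two distinct vertices are adjacent iff some edge contains both. For a basic set $B$, $A(B)$ is the set of connected components of the 2-section of $\overline{\mathcal{H}_B}$ containing at least one vertex of $B$, and $\alpha_B=|A(B)|$. A union of sets is connected if the intersection graph of the sets is connected. $Comp(\mathcal{H})$ is the hypergraph without repeated edges on $V(\mathcal{H})$ whose edges are $V(\mathcal{H})$, all singletons, and all proper subsets obtainable from edges of $\mathcal{H}$ by repeated nonempty intersections and connected unions; a basic set is an edge of $Comp(\mathcal{H})$ with more than one vertex that is not a connected union of strictly smaller edges of $Comp(\mathcal{H})$. *)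

theory Defs
  imports Main
begin

text \<open>A hypergraph is given by a finite vertex set V and a family E of nonempty
subsets of V (repeated edges are irrelevant for all notions below).\<close>

definition hypergraph :: "'a set \<Rightarrow> 'a set set \<Rightarrow> bool" where
  "hypergraph V E \<longleftrightarrow> finite V \<and> (\<forall>e\<in>E. e \<noteq> {} \<and> e \<subseteq> V)"

definition adj_on :: "'a set set \<Rightarrow> 'a set \<Rightarrow> ('a \<times> 'a) set" where
  "adj_on T S = {(x, y). {x, y} \<in> T \<and> x \<in> S \<and> y \<in> S}"

definition induces_connected :: "'a set set \<Rightarrow> 'a set \<Rightarrow> bool" where
  "induces_connected T S \<longleftrightarrow> (\<forall>x\<in>S. \<forall>y\<in>S. (x, y) \<in> (adj_on T S)\<^sup>*)"

definition is_tree :: "'a set \<Rightarrow> 'a set set \<Rightarrow> bool" where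
  "is_tree V T \<longleftrightarrow> finite V \<and>
     (\<forall>t\<in>T. \<exists>x y. t = {x, y} \<and> x \<noteq> y \<and> x \<in> V \<and> y \<in> V) \<and>
     induces_connected T V \<and> card T + 1 = card V"

definition host_tree :: "'a set \<Rightarrow> 'a set set \<Rightarrow> 'a set set \<Rightarrow> bool" where
  "host_tree V E T \<longleftrightarrow> is_tree V T \<and> (\<forall>e\<in>E. induces_connected T e)"

definition hypertree :: "'a set \<Rightarrow> 'a set set \<Rightarrow> bool" where
  "hypertree V E \<longleftrightarrow> hypergraph V E \<and> (\<exists>T. host_tree V E T)"

definition I_H :: "'a set \<Rightarrow> 'a set set \<Rightarrow> 'a set \<Rightarrow> 'a set" where
  "I_H V E V' = (if \<exists>e\<in>E. V' \<subseteq> e then \<Inter>{e\<in>E. V' \<subseteq> e} else V)"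

definition edges_not_containing :: "'a set set \<Rightarrow> 'a set \<Rightarrow> 'a set set" where
  "edges_not_containing E A = {e\<in>E. \<not> A \<subseteq> e}"

definition two_section :: "'a set \<Rightarrow> 'a set set \<Rightarrow> ('a \<times> 'a) set" where
  "two_section V E = {(x, y). x \<in> V \<and> y \<in> V \<and> x \<noteq> y \<and> (\<exists>e\<in>E. x \<in> e \<and> y \<in> e)}"

definition components :: "'a set \<Rightarrow> 'a set set \<Rightarrow> 'a set set" where
  "components V E = {{y\<in>V. (x, y) \<in> (two_section V E)\<^sup>*} | x. x \<in> V}"

definition A_of :: "'a set \<Rightarrow> 'a set set \<Rightarrow> 'a set \<Rightarrow> 'a set set" where
  "A_of V E B = {C \<in> components V (edges_not_containing E B). C \<inter> B \<noteq> {}}"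

definition alpha :: "'a set \<Rightarrow> 'a set set \<Rightarrow> 'a set \<Rightarrow> nat" where
  "alpha V E B = card (A_of V E B)"

definition connected_family :: "'a set set \<Rightarrow> bool" where
  "connected_family F \<longleftrightarrow>
     (\<forall>X\<in>F. \<forall>Y\<in>F. (X, Y) \<in> {(X, Y). X \<in> F \<and> Y \<in> F \<and> X \<inter> Y \<noteq> {}}\<^sup>*)"

inductive_set gen_sets :: "'a set set \<Rightarrow> 'a set set" for E where
  base: "e \<in> E \<Longrightarrow> e \<in> gen_sets E"
| inter: "X \<in> gen_sets E \<Longrightarrow> Y \<in> gen_sets E \<Longrightarrow> X \<inter> Y \<noteq> {} \<Longrightarrow> X \<inter> Y \<in> gen_sets E"
| union: "finite F \<Longrightarrow> F \<noteq> {} \<Longrightarrow> \<forall>X\<in>F. X \<in> gen_sets E \<Longrightarrow> connected_family F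
          \<Longrightarrow> \<Union>F \<in> gen_sets E"

definition Comp :: "'a set \<Rightarrow> 'a set set \<Rightarrow> 'a set set" where
  "Comp V E = {V} \<union> {{v} | v. v \<in> V} \<union> {X \<in> gen_sets E. X \<subset> V}"

definition basic_set :: "'a set \<Rightarrow> 'a set set \<Rightarrow> 'a set \<Rightarrow> bool" where
  "basic_set V E B \<longleftrightarrow> B \<in> Comp V E \<and> card B > 1 \<and>
     \<not> (\<exists>F. F \<noteq> {} \<and> F \<subseteq> {X \<in> Comp V E. X \<subset> B} \<and> connected_family F \<and> \<Union>F = B)"

end

theory Submission
  imports Defs
begin

definition cls :: "'a set \<Rightarrow> 'a set set \<Rightarrow> 'a \<Rightarrow> 'a set" where
  "cls S F x = {y\<in>S. (x, y) \<in> (adj_on F S)\<^sup>*}"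

definition comps :: "'a set \<Rightarrow> 'a set set \<Rightarrow> 'a set set" where
  "comps S F = cls S F ` S"

definition nc :: "'a set \<Rightarrow> 'a set set \<Rightarrow> nat" where
  "nc S F = card (comps S F)"

lemma adj_sym: "(x, y) \<in> adj_on F S \<Longrightarrow> (y, x) \<in> adj_on F S"
  by (auto simp: adj_on_def insert_commute)

lemma adj_in: "(x, y) \<in> adj_on F S \<Longrightarrow> x \<in> S \<and> y \<in> S"
  by (auto simp: adj_on_def)

lemma sym_adj: "sym (adj_on F S)"
  by (meson adj_sym symI)

lemma rt_sym: "(x, y) \<in> (adj_on F S)\<^sup>* \<Longrightarrow> (y, x) \<in> (adj_on F S)\<^sup>*"
  by (meson sym_adj sym_rtrancl symD)

lemma cls_self: "x \<in> S \<Longrightarrow> x \<in> cls S F x"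
  by (simp add: cls_def)

lemma cls_sub: "cls S F x \<subseteq> S"
  by (auto simp: cls_def)

lemma cls_eq: "y \<in> cls S F x \<Longrightarrow> cls S F y = cls S F x"
  unfolding cls_def using rt_sym rtrancl_trans by fastforce

lemma cls_eq_iff: "x \<in> S \<Longrightarrow> y \<in> S \<Longrightarrow> cls S F x = cls S F y \<longleftrightarrow> (x, y) \<in> (adj_on F S)\<^sup>*"
  by (metis cls_def cls_eq cls_self mem_Collect_eq)

lemma finite_comps: "finite S \<Longrightarrow> finite (comps S F)"
  by (simp add: comps_def)

lemma adj_insert: "a \<in> S \<Longrightarrow> b \<in> S \<Longrightarrow>
  adj_on (insert {a, b} F) S = adj_on F S \<union> {(a, b), (b, a)}"
  by (auto simp: adj_on_def doubleton_eq_iff)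

lemma path_insert:
  assumes "(x, y) \<in> (R \<union> {(a, b), (b, a)})\<^sup>*" and "sym R"
  shows "(x, y) \<in> R\<^sup>* \<or> (((x, a) \<in> R\<^sup>* \<or> (x, b) \<in> R\<^sup>*) \<and> ((y, a) \<in> R\<^sup>* \<or> (y, b) \<in> R\<^sup>*))"
  using assms(1)
proof (induction rule: rtrancl_induct)
  case base
  then show ?case by simp
next
  case (step y z)
  from step.hyps(2) show ?case
  proof
    assume yz: "(y, z) \<in> R"
    then have zy: "(z, y) \<in> R" using assms(2) by (meson symD)
    from step.IH show ?case
      by (meson converse_rtrancl_into_rtrancl rtrancl.rtrancl_into_rtrancl yz zy)
  next
    assume "(y, z) \<in> {(a, b), (b, a)}"
    then show ?case using step.IH by auto
  qed
qed

lemma nc_insert: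
  assumes "finite S" "a \<in> S" "b \<in> S"
  shows "nc S F \<le> nc S (insert {a, b} F) + 1"
proof -
  let ?R = "adj_on F S" and ?R' = "adj_on (insert {a, b} F) S"
  have R': "?R' = ?R \<union> {(a, b), (b, a)}" using adj_insert[OF assms(2,3)] by blast
  have RR: "?R\<^sup>* \<subseteq> ?R'\<^sup>*" unfolding R' by (rule rtrancl_mono) blast
  define f where "f C = {y\<in>S. \<exists>x\<in>C. (x, y) \<in> ?R'\<^sup>*}" for C
  have fcls: "f (cls S F x) = cls S (insert {a, b} F) x" if "x \<in> S" for x
  proof
    show "f (cls S F x) \<subseteq> cls S (insert {a, b} F) x"
    proof
      fix y assume "y \<in> f (cls S F x)"
      then obtain z where y: "y \<in> S" "z \<in> cls S F x" "(z, y) \<in> ?R'\<^sup>*"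
        unfolding f_def by blast
      then have "(x, z) \<in> ?R'\<^sup>*" using RR unfolding cls_def by blast
      then have "(x, y) \<in> ?R'\<^sup>*" using y(3) by (rule rtrancl_trans)
      then show "y \<in> cls S (insert {a, b} F) x" using y(1) unfolding cls_def by blast
    qed
    show "cls S (insert {a, b} F) x \<subseteq> f (cls S F x)"
    proof
      fix y assume "y \<in> cls S (insert {a, b} F) x"
      then show "y \<in> f (cls S F x)" using cls_self[OF that, of F] unfolding f_def cls_def by blast
    qed
  qed
  have inj: "inj_on f (comps S F - {cls S F a})"
  proof (rule inj_onI)
    fix C D assume C: "C \<in> comps S F - {cls S F a}" and D: "D \<in> comps S F - {cls S F a}"
      and eq: "f C = f D"
    obtain x where x: "x \<in> S" "C = cls S F x" using C unfolding comps_def by auto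
    obtain y where y: "y \<in> S" "D = cls S F y" using D unfolding comps_def by auto
    have "cls S (insert {a, b} F) x = cls S (insert {a, b} F) y" using eq fcls x y by simp
    then have "(x, y) \<in> ?R'\<^sup>*" using cls_eq_iff x y by metis
    then have P: "(x, y) \<in> ?R\<^sup>* \<or> (((x, a) \<in> ?R\<^sup>* \<or> (x, b) \<in> ?R\<^sup>*) \<and> ((y, a) \<in> ?R\<^sup>* \<or> (y, b) \<in> ?R\<^sup>*))"
      using path_insert[of x y ?R a b] R' sym_adj by metis
    have na1: "(x, a) \<notin> ?R\<^sup>*"
      using C x cls_eq_iff[OF x(1) assms(2), of F] by auto
    have na2: "(y, a) \<notin> ?R\<^sup>*"
      using D y cls_eq_iff[OF y(1) assms(2), of F] by auto
    show "C = D"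
    proof (cases "(x, y) \<in> ?R\<^sup>*")
      case True
      then show ?thesis using x y cls_eq_iff by metis
    next
      case False
      then have "(x, b) \<in> ?R\<^sup>*" "(y, b) \<in> ?R\<^sup>*" using P na1 na2 by auto
      then have "cls S F x = cls S F b" "cls S F y = cls S F b"
        using cls_eq_iff x y assms(3) by metis+
      then show ?thesis using x y by simp
    qed
  qed
  have img: "f ` (comps S F - {cls S F a}) \<subseteq> comps S (insert {a, b} F)"
    using fcls by (auto simp: comps_def)
  have "card (comps S F - {cls S F a}) \<le> card (comps S (insert {a, b} F))"
    using card_inj_on_le[OF inj img] finite_comps assms(1) by blast
  moreover have "card (comps S F) \<le> card (comps S F - {cls S F a}) + 1"
    by (cases "cls S F a \<in> comps S F") (simp_all add: card_Diff_singleton_if)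
  ultimately show ?thesis by (simp add: nc_def)
qed

lemma nc_empty: "finite S \<Longrightarrow> nc S {} = card S"
proof -
  assume "finite S"
  have "adj_on {} S = {}" by (simp add: adj_on_def)
  then have "cls S {} x = (if x \<in> S then {x} else {})" for x by (auto simp: cls_def)
  then have "comps S {} = (\<lambda>x. {x}) ` S" by (auto simp: comps_def)
  then show ?thesis by (simp add: nc_def card_image)
qed

lemma nc_lower:
  assumes "finite F" "finite S" "\<forall>e\<in>F. \<exists>a b. e = {a, b} \<and> a \<in> S \<and> b \<in> S"
  shows "card S \<le> card F + nc S F"
  using assms
proof (induction F rule: finite_induct)
  case empty
  then show ?case by (simp add: nc_empty)
next
  case (insert e F)
  then obtain a b where e: "e = {a, b}" "a \<in> S" "b \<in> S" by blast
  have "nc S F \<le> nc S (insert e F) + 1" using nc_insert[OF insert.prems(1) e(2,3)] e by simp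
  then show ?case using insert by simp
qed

definition tin :: "'a set set \<Rightarrow> 'a set \<Rightarrow> 'a set set" where
  "tin T S = {e\<in>T. e \<subseteq> S}"

definition share :: "'a set set \<Rightarrow> ('a \<times> 'a) set" where
  "share F = {(x, y). \<exists>X\<in>F. x \<in> X \<and> y \<in> X}"

lemma tree_basic:
  assumes "is_tree V T"
  shows "finite V" "finite T" "\<forall>t\<in>T. \<exists>x y. t = {x, y} \<and> x \<noteq> y \<and> x \<in> V \<and> y \<in> V"
    "V \<noteq> {}" "induces_connected T V" "card T + 1 = card V"
proof -
  show fV: "finite V" and tT: "\<forall>t\<in>T. \<exists>x y. t = {x, y} \<and> x \<noteq> y \<and> x \<in> V \<and> y \<in> V"
    and "induces_connected T V" and "card T + 1 = card V"
    using assms by (auto simp: is_tree_def)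
  have "T \<subseteq> Pow V" using tT by auto
  then show "finite T" using fV finite_subset by blast
  show "V \<noteq> {}" using assms by (auto simp: is_tree_def)
qed

lemma nc_conn1:
  assumes "S \<noteq> {}" "induces_connected G S"
  shows "nc S G = 1"
proof -
  have "cls S G x = S" if "x \<in> S" for x
    using assms(2) that unfolding cls_def induces_connected_def by auto
  then have "comps S G = {S}" using assms(1) unfolding comps_def by auto
  then show ?thesis by (simp add: nc_def)
qed

lemma nc_1_conn:
  assumes "nc S G = 1"
  shows "induces_connected G S"
proof -
  obtain C where C: "comps S G = {C}" using assms unfolding nc_def by (meson card_1_singletonE)
  show ?thesis unfolding induces_connected_def
  proof (intro ballI)
    fix x y assume xy: "x \<in> S" "y \<in> S"
    then have "cls S G x = C" "cls S G y = C" using C unfolding comps_def by auto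
    then show "(x, y) \<in> (adj_on G S)\<^sup>*" using cls_eq_iff xy by metis
  qed
qed

lemma nc_pos:
  assumes "finite S" "S \<noteq> {}"
  shows "nc S G \<ge> 1"
proof -
  have "comps S G \<noteq> {}" using assms(2) unfolding comps_def by auto
  then show ?thesis using finite_comps[OF assms(1)] unfolding nc_def
    by (simp add: Suc_leI card_gt_0_iff)
qed

lemma tree_tight:
  assumes T: "is_tree V T" and F: "F \<subseteq> T"
  shows "card F + nc V F = card V"
proof -
  note tb = tree_basic[OF T]
  have low: "card V \<le> card F + nc V F"
  proof (rule nc_lower)
    show "finite F" using F tb(2) finite_subset by blast
    show "finite V" by (rule tb(1))
    show "\<forall>e\<in>F. \<exists>a b. e = {a, b} \<and> a \<in> V \<and> b \<in> V"
    proof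
      fix e assume "e \<in> F"
      then have "e \<in> T" using F by blast
      then obtain x y where "e = {x, y} \<and> x \<noteq> y \<and> x \<in> V \<and> y \<in> V" using tb(3) by metis
      then show "\<exists>a b. e = {a, b} \<and> a \<in> V \<and> b \<in> V" by blast
    qed
  qed
  have ncT: "nc V T = 1" by (rule nc_conn1[OF tb(4) tb(5)])
  have up: "D \<subseteq> T \<Longrightarrow> card (T - D) + nc V (T - D) \<le> card V" if "finite D" for D
    using that
  proof (induction D rule: finite_induct)
    case empty
    then show ?case using ncT tb(6) by simp
  next
    case (insert d D)
    have DT: "D \<subseteq> T" "d \<in> T" using insert.prems by auto
    have IH: "card (T - D) + nc V (T - D) \<le> card V" using insert.IH[OF DT(1)] .
    have dT: "d \<in> T - D" using DT(2) insert.hyps(2) by blast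
    obtain a b where ab: "d = {a, b} \<and> a \<noteq> b \<and> a \<in> V \<and> b \<in> V" using tb(3) DT(2) by metis
    then have ab: "d = {a, b}" "a \<in> V" "b \<in> V" by auto
    have eq: "T - insert d D = (T - D) - {d}" by blast
    have "nc V ((T - D) - {d}) \<le> nc V (insert {a, b} ((T - D) - {d})) + 1"
      by (rule nc_insert[OF tb(1) ab(2,3)])
    moreover have "insert {a, b} ((T - D) - {d}) = T - D" using insert_Diff[OF dT] ab(1) by simp
    moreover have "card ((T - D) - {d}) + 1 = card (T - D)"
    proof -
      have "finite (T - D)" using tb(2) by simp
      then have "card (T - D) > 0" using dT card_gt_0_iff by blast
      then show ?thesis using dT by (simp add: card_Diff_singleton)
    qed
    ultimately show ?case using IH eq by simp
  qed
  have "T - (T - F) = F" using F by blast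
  moreover have "finite (T - F)" using tb(2) by simp
  ultimately have "card F + nc V F \<le> card V" using up[of "T - F"] by simp
  then show ?thesis using low by simp
qed

lemma adj_restrict:
  assumes "\<forall>e\<in>F. e \<subseteq> S"
  shows "adj_on F V' = adj_on F (S \<inter> V')"
  using assms by (auto simp: adj_on_def)

lemma nc_restrict:
  assumes fV: "finite V" and SV: "S \<subseteq> V" and FS: "\<forall>e\<in>F. e \<subseteq> S"
  shows "nc V F = nc S F + card (V - S)"
proof -
  have A: "adj_on F V = adj_on F S" using adj_restrict[OF FS, of V] SV
    by (simp add: Int_absorb2)
  have AS: "(x, y) \<in> adj_on F S \<Longrightarrow> x \<in> S \<and> y \<in> S" for x y by (rule adj_in)
  have c1: "cls V F x = cls S F x" if "x \<in> S" for x
  proof -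
    have "y \<in> S" if "(x, y) \<in> (adj_on F S)\<^sup>*" for y
      using that \<open>x \<in> S\<close> by (induction rule: rtrancl_induct) (auto dest: AS)
    then show ?thesis unfolding cls_def A using SV by auto
  qed
  have c2: "cls V F x = {x}" if "x \<in> V - S" for x
  proof -
    have "y = x" if "(x, y) \<in> (adj_on F S)\<^sup>*" for y
      using that \<open>x \<in> V - S\<close> by (cases rule: converse_rtranclE) (auto dest: AS)
    then show ?thesis unfolding cls_def A using that by auto
  qed
  have "comps V F = cls V F ` S \<union> cls V F ` (V - S)" unfolding comps_def using SV by blast
  also have "\<dots> = comps S F \<union> (\<lambda>x. {x}) ` (V - S)"
    unfolding comps_def using c1 c2 by (auto simp: image_def)
  finally have eq: "comps V F = comps S F \<union> (\<lambda>x. {x}) ` (V - S)" .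
  have disj: "comps S F \<inter> (\<lambda>x. {x}) ` (V - S) = {}"
    unfolding comps_def using cls_sub by fastforce
  have fS: "finite S" using fV SV finite_subset by blast
  have "nc V F = card (comps S F) + card ((\<lambda>x. {x}) ` (V - S))"
    unfolding nc_def eq
    by (rule card_Un_disjoint) (use finite_comps[OF fS] fV disj in auto)
  also have "card ((\<lambda>x. {x}) ` (V - S)) = card (V - S)" by (simp add: card_image)
  finally show ?thesis by (simp add: nc_def)
qed

lemma forest_count:
  assumes T: "is_tree V T" and F: "F \<subseteq> T" and SV: "S \<subseteq> V" and FS: "\<forall>e\<in>F. e \<subseteq> S"
  shows "card F + nc S F = card S"
proof -
  note tb = tree_basic[OF T]
  have "card F + nc V F = card V" by (rule tree_tight[OF T F])
  moreover have "nc V F = nc S F + card (V - S)" by (rule nc_restrict[OF tb(1) SV FS])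
  moreover have "card V = card S + card (V - S)"
    using tb(1) SV by (metis card_Diff_subset card_mono finite_subset le_add_diff_inverse)
  ultimately show ?thesis by simp
qed

lemma adj_tin: "adj_on (tin T S) S = adj_on T S"
  by (auto simp: adj_on_def tin_def)

lemma nc_tin: "nc S (tin T S) = nc S T"
  by (simp add: nc_def comps_def cls_def adj_tin)

lemma tin_sub: "tin T S \<subseteq> T" "\<forall>e\<in>tin T S. e \<subseteq> S"
  by (auto simp: tin_def)

lemma count_eq:
  assumes "is_tree V T" "S \<subseteq> V"
  shows "card (tin T S) + nc S T = card S"
  using forest_count[OF assms(1) tin_sub(1) assms(2) tin_sub(2)] nc_tin by metis

lemma conn_count:
  assumes "is_tree V T" "S \<subseteq> V" "S \<noteq> {}" "induces_connected T S"
  shows "card (tin T S) + 1 = card S"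
  using count_eq[OF assms(1,2)] nc_conn1[OF assms(3,4)] by simp

lemma count_le:
  assumes "is_tree V T" "S \<subseteq> V" "S \<noteq> {}"
  shows "card (tin T S) + 1 \<le> card S"
proof -
  have "finite S" using tree_basic(1)[OF assms(1)] assms(2) finite_subset by blast
  then show ?thesis using count_eq[OF assms(1,2)] nc_pos[OF _ assms(3), of T] by simp
qed

lemma inter_conn:
  assumes T: "is_tree V T" and XV: "X \<subseteq> V" and YV: "Y \<subseteq> V"
    and cX: "induces_connected T X" and cY: "induces_connected T Y" and ne: "X \<inter> Y \<noteq> {}"
  shows "induces_connected T (X \<inter> Y)"
proof -
  note tb = tree_basic[OF T]
  have fin: "finite (tin T S)" for S using tb(2) by (simp add: tin_def)
  have fX: "finite X" "finite Y" using tb(1) XV YV finite_subset by blast+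
  have Xne: "X \<noteq> {}" "Y \<noteq> {}" using ne by auto
  have X: "card (tin T X) + 1 = card X" by (rule conn_count[OF T XV Xne(1) cX])
  have Y: "card (tin T Y) + 1 = card Y" by (rule conn_count[OF T YV Xne(2) cY])
  have UV: "X \<union> Y \<subseteq> V" using XV YV by blast
  have Une: "X \<union> Y \<noteq> {}" using ne by blast
  have U: "card (tin T (X \<union> Y)) + 1 \<le> card (X \<union> Y)" using count_le[OF T UV Une] .
  have un: "tin T X \<union> tin T Y \<subseteq> tin T (X \<union> Y)" by (auto simp: tin_def)
  have it: "tin T X \<inter> tin T Y = tin T (X \<inter> Y)" by (auto simp: tin_def)
  have c1: "card (tin T X) + card (tin T Y) = card (tin T X \<union> tin T Y) + card (tin T (X \<inter> Y))"
    using card_Un_Int[OF fin fin] it by simp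
  have c2: "card (tin T X \<union> tin T Y) \<le> card (tin T (X \<union> Y))" using card_mono[OF fin un] .
  have c3: "card X + card Y = card (X \<union> Y) + card (X \<inter> Y)" using card_Un_Int[OF fX] .
  have XYV: "X \<inter> Y \<subseteq> V" using XV by blast
  have c4: "card (tin T (X \<inter> Y)) + nc (X \<inter> Y) T = card (X \<inter> Y)" using count_eq[OF T XYV] .
  have fI: "finite (X \<inter> Y)" using fX by blast
  have p: "nc (X \<inter> Y) T \<ge> 1" using nc_pos[OF fI ne] .
  have "nc (X \<inter> Y) T = 1" using X Y U c1 c2 c3 c4 p by linarith
  then show ?thesis by (rule nc_1_conn)
qed

lemma share_sym: "sym (share F)"
  unfolding share_def sym_def by blast

lemma union_conn:
  assumes mem: "\<forall>X\<in>F. \<forall>a\<in>X. \<forall>b\<in>X. (a, b) \<in> (adj_on G U)\<^sup>*"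
    and sh: "\<forall>x\<in>U. \<forall>y\<in>U. (x, y) \<in> (share F)\<^sup>*"
  shows "induces_connected G U"
  unfolding induces_connected_def
proof (intro ballI)
  fix x y assume "x \<in> U" "y \<in> U"
  then have "(x, y) \<in> (share F)\<^sup>*" using sh by blast
  then show "(x, y) \<in> (adj_on G U)\<^sup>*"
  proof (induction rule: rtrancl_induct)
    case base
    then show ?case by simp
  next
    case (step y z)
    then obtain X where "X \<in> F" "y \<in> X" "z \<in> X" by (auto simp: share_def)
    then have "(y, z) \<in> (adj_on G U)\<^sup>*" using mem by blast
    then show ?case using step.IH by (rule rtrancl_trans[rotated])
  qed
qed

lemma conn_mono:
  assumes "induces_connected T X" "X \<subseteq> U"
  shows "\<forall>a\<in>X. \<forall>b\<in>X. (a, b) \<in> (adj_on T U)\<^sup>*"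
proof -
  have "adj_on T X \<subseteq> adj_on T U" using assms(2) by (auto simp: adj_on_def)
  then show ?thesis using assms(1) rtrancl_mono unfolding induces_connected_def by blast
qed

lemma union_conn_T:
  assumes "\<forall>X\<in>F. X \<subseteq> U \<and> induces_connected T X"
    and "\<forall>x\<in>U. \<forall>y\<in>U. (x, y) \<in> (share F)\<^sup>*"
  shows "induces_connected T U"
  by (rule union_conn[OF _ assms(2)]) (use assms(1) conn_mono in blast)

lemma union_edge:
  assumes T: "is_tree V T" and UV: "U \<subseteq> V"
    and F: "\<forall>X\<in>F. X \<subseteq> U \<and> induces_connected T X"
    and sh: "\<forall>x\<in>U. \<forall>y\<in>U. (x, y) \<in> (share F)\<^sup>*"
    and e: "e \<in> T" "e \<subseteq> U"
  shows "\<exists>X\<in>F. e \<subseteq> X"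
proof (rule ccontr)
  assume no: "\<not> (\<exists>X\<in>F. e \<subseteq> X)"
  note tb = tree_basic[OF T]
  define G where "G = tin T U - {e}"
  have mem: "\<forall>X\<in>F. \<forall>a\<in>X. \<forall>b\<in>X. (a, b) \<in> (adj_on G U)\<^sup>*"
  proof (intro ballI)
    fix X a b assume X: "X \<in> F" and ab: "a \<in> X" "b \<in> X"
    have "adj_on T X \<subseteq> adj_on G U"
      using F X no unfolding adj_on_def G_def tin_def by auto
    then show "(a, b) \<in> (adj_on G U)\<^sup>*"
      using F X ab rtrancl_mono unfolding induces_connected_def by blast
  qed
  have cG: "induces_connected G U" by (rule union_conn[OF mem sh])
  have cT: "induces_connected T U" by (rule union_conn_T[OF F sh])
  obtain x y where xy: "e = {x, y} \<and> x \<noteq> y \<and> x \<in> V \<and> y \<in> V" using tb(3) e(1) by metis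
  have Une: "U \<noteq> {}" using e(2) xy by auto
  have "nc U G = 1" using nc_conn1[OF Une cG] .
  moreover have "card G + nc U G = card U"
    by (rule forest_count[OF T _ UV]) (auto simp: G_def tin_def)
  moreover have "card (tin T U) + 1 = card U" using conn_count[OF T UV Une cT] .
  moreover have "card G = card (tin T U) - 1" "e \<in> tin T U" "finite (tin T U)"
    using e tb(2) by (auto simp: G_def tin_def)
  moreover have "card (tin T U) > 0" using e tb(2) by (auto simp: tin_def card_gt_0_iff)
  ultimately show False by linarith
qed

lemma cf_share:
  assumes "connected_family F"
  shows "\<forall>x\<in>\<Union>F. \<forall>y\<in>\<Union>F. (x, y) \<in> (share F)\<^sup>*"
proof (intro ballI)
  fix x y assume "x \<in> \<Union>F" "y \<in> \<Union>F"
  then obtain X Y where XY: "X \<in> F" "Y \<in> F" "x \<in> X" "y \<in> Y" by blast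
  let ?R = "{(X, Y). X \<in> F \<and> Y \<in> F \<and> X \<inter> Y \<noteq> {}}"
  have "(X, Y) \<in> ?R\<^sup>*" using assms XY unfolding connected_family_def by blast
  then have "\<forall>y\<in>Y. (x, y) \<in> (share F)\<^sup>*"
  proof (induction rule: rtrancl_induct)
    case base
    then show ?case using XY by (auto simp: share_def)
  next
    case (step Y Z)
    then obtain w where w: "w \<in> Y" "w \<in> Z" "Z \<in> F" by blast
    show ?case
    proof
      fix z assume "z \<in> Z"
      then have "(w, z) \<in> share F" using w by (auto simp: share_def)
      then show "(x, z) \<in> (share F)\<^sup>*" using step.IH w by (meson rtrancl.rtrancl_into_rtrancl)
    qed
  qed
  then show "(x, y) \<in> (share F)\<^sup>*" using XY by blast
qed

lemma I_contains:
  assumes "e \<subseteq> V"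
  shows "e \<subseteq> I_H V E e"
  unfolding I_H_def using assms by auto

lemma I_sub_edge: "h \<in> E \<Longrightarrow> e \<subseteq> h \<Longrightarrow> I_H V E e \<subseteq> h"
  unfolding I_H_def by auto

lemma I_sub_V:
  assumes "\<forall>h\<in>E. h \<subseteq> V"
  shows "I_H V E e \<subseteq> V"
proof (cases "\<exists>h\<in>E. e \<subseteq> h")
  case True
  then obtain h where "h \<in> E" "e \<subseteq> h" by blast
  then have "I_H V E e \<subseteq> h" by (rule I_sub_edge)
  then show ?thesis using assms \<open>h \<in> E\<close> by blast
next
  case False
  then show ?thesis unfolding I_H_def by simp
qed

lemma tree_edge:
  assumes "is_tree V T" "e \<in> T"
  obtains x y where "e = {x, y}" "x \<noteq> y" "x \<in> V" "y \<in> V"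
proof -
  have "\<exists>x y. e = {x, y} \<and> x \<noteq> y \<and> x \<in> V \<and> y \<in> V"
    using assms tree_basic(3) by blast
  then show ?thesis using that by blast
qed

lemma tree_edge_distinct:
  assumes "is_tree V T" "{p, q} \<in> T"
  shows "p \<noteq> q" "p \<in> V" "q \<in> V"
proof -
  obtain x y where xy: "{p, q} = {x, y}" "x \<noteq> y" "x \<in> V" "y \<in> V"
    using tree_edge[OF assms] by metis
  then show "p \<noteq> q" "p \<in> V" "q \<in> V" by (auto simp: doubleton_eq_iff)
qed

lemma gen_props:
  assumes H: "hypergraph V E" and HT: "host_tree V E T" and X: "X \<in> gen_sets E"
  shows "X \<subseteq> V \<and> X \<noteq> {} \<and> induces_connected T X \<and> (\<forall>e\<in>T. e \<subseteq> X \<longrightarrow> I_H V E e \<subseteq> X)"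
  using X
proof (induction rule: gen_sets.induct)
  case (base h)
  have "h \<subseteq> V" "h \<noteq> {}" using H base unfolding hypergraph_def by auto
  moreover have "induces_connected T h" using HT base unfolding host_tree_def by auto
  moreover have "\<forall>e\<in>T. e \<subseteq> h \<longrightarrow> I_H V E e \<subseteq> h" using I_sub_edge[OF base] by blast
  ultimately show ?case by blast
next
  case (inter X Y)
  have T: "is_tree V T" using HT host_tree_def by blast
  have PX: "X \<subseteq> V" "induces_connected T X" "\<forall>e\<in>T. e \<subseteq> X \<longrightarrow> I_H V E e \<subseteq> X"
    using inter by auto
  have PY: "Y \<subseteq> V" "induces_connected T Y" "\<forall>e\<in>T. e \<subseteq> Y \<longrightarrow> I_H V E e \<subseteq> Y"
    using inter by auto
  have ne: "X \<inter> Y \<noteq> {}" using inter by auto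
  have "induces_connected T (X \<inter> Y)"
    by (rule inter_conn[OF T PX(1) PY(1) PX(2) PY(2) ne])
  moreover have "\<forall>e\<in>T. e \<subseteq> X \<inter> Y \<longrightarrow> I_H V E e \<subseteq> X \<inter> Y" using PX(3) PY(3) by blast
  ultimately show ?case using PX(1) ne by blast
next
  case (union F)
  have T: "is_tree V T" using HT host_tree_def by blast
  have P: "\<forall>X\<in>F. X \<subseteq> V \<and> X \<noteq> {} \<and> induces_connected T X \<and> (\<forall>e\<in>T. e \<subseteq> X \<longrightarrow> I_H V E e \<subseteq> X)"
    using union by blast
  have cf: "connected_family F" "F \<noteq> {}" using union by blast+
  have UV: "\<Union>F \<subseteq> V" using P by blast
  have P2: "\<forall>X\<in>F. X \<noteq> {}" using P by simp
  obtain X0 where X0: "X0 \<in> F" using cf(2) by blast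
  then obtain x0 where "x0 \<in> X0" using P2 by blast
  then have Une: "\<Union>F \<noteq> {}" using X0 by blast
  have P3: "\<forall>X\<in>F. induces_connected T X" using P by simp
  have fam: "\<forall>X\<in>F. X \<subseteq> \<Union>F \<and> induces_connected T X" using P3 by blast
  have sh: "\<forall>x\<in>\<Union>F. \<forall>y\<in>\<Union>F. (x, y) \<in> (share F)\<^sup>*" using cf_share[OF cf(1)] .
  have conn: "induces_connected T (\<Union>F)" by (rule union_conn_T[OF fam sh])
  have "\<forall>e\<in>T. e \<subseteq> \<Union>F \<longrightarrow> I_H V E e \<subseteq> \<Union>F"
  proof (intro ballI impI)
    fix e assume e: "e \<in> T" "e \<subseteq> \<Union>F"
    obtain X where X: "X \<in> F" "e \<subseteq> X" using union_edge[OF T UV fam sh e] by blast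
    have P4: "\<forall>e\<in>T. e \<subseteq> X \<longrightarrow> I_H V E e \<subseteq> X" using P X(1) by simp
    then have "I_H V E e \<subseteq> X" using X(2) e(1) by blast
    then show "I_H V E e \<subseteq> \<Union>F" using X(1) by blast
  qed
  then show ?case using UV Une conn by simp
qed

theorem mainTheorem14:
  fixes V :: "'a set" and E T :: "'a set set" and B :: "'a set"
  assumes "hypertree V E"
    and "host_tree V E T"
    and "basic_set V E B"
  shows "card {e \<in> T. I_H V E e = B} = alpha V E B - 1"
proof -
  have H: "hypergraph V E" using assms(1) unfolding hypertree_def by simp
  have T: "is_tree V T" using assms(2) unfolding host_tree_def by simp
  note tb = tree_basic[OF T]
  have EV: "\<forall>h\<in>E. h \<subseteq> V" using H unfolding hypergraph_def by simp
  have Econn: "\<forall>h\<in>E. induces_connected T h" using assms(2) unfolding host_tree_def by simp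
  have BC: "B \<in> Comp V E" "card B > 1" using assms(3) unfolding basic_set_def by simp_all
  have Bprops: "B \<subseteq> V \<and> B \<noteq> {} \<and> induces_connected T B \<and> (\<forall>e\<in>T. e \<subseteq> B \<longrightarrow> I_H V E e \<subseteq> B)"
  proof -
    from BC(1) consider "B = V" | v where "B = {v}" | "B \<in> gen_sets E" unfolding Comp_def by blast
    then show ?thesis
    proof cases
      case 1
      then show ?thesis using tb(4,5) I_sub_V[OF EV] by simp
    next
      case 2
      then show ?thesis using BC(2) by simp
    next
      case 3
      then show ?thesis using gen_props[OF H assms(2)] by simp
    qed
  qed
  have BV: "B \<subseteq> V" and Bne: "B \<noteq> {}" and Bconn: "induces_connected T B"
    and BI: "\<forall>e\<in>T. e \<subseteq> B \<longrightarrow> I_H V E e \<subseteq> B" using Bprops by simp_all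
  define E' where "E' = edges_not_containing E B"
  define Fb where "Fb = {e\<in>T. e \<subseteq> B \<and> (\<exists>h\<in>E. e \<subseteq> h \<and> \<not> B \<subseteq> h)}"
  have good: "{e\<in>T. I_H V E e = B} = tin T B - Fb"
  proof (intro equalityI subsetI)
    fix e assume "e \<in> {e\<in>T. I_H V E e = B}"
    then have e: "e \<in> T" "I_H V E e = B" by auto
    obtain x y where "e = {x, y}" "x \<noteq> y" "x \<in> V" "y \<in> V" using tree_edge[OF T e(1)] by metis
    then have eV: "e \<subseteq> V" by simp
    have eB: "e \<subseteq> B" using I_contains[OF eV, of E] e(2) by simp
    have "e \<notin> Fb"
    proof
      assume "e \<in> Fb"
      then obtain h where h: "h \<in> E" "e \<subseteq> h" "\<not> B \<subseteq> h" unfolding Fb_def by blast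
      have "I_H V E e \<subseteq> h" by (rule I_sub_edge[OF h(1,2)])
      then show False using h(3) e(2) by simp
    qed
    then show "e \<in> tin T B - Fb" using e(1) eB by (simp add: tin_def)
  next
    fix e assume "e \<in> tin T B - Fb"
    then have e: "e \<in> T" "e \<subseteq> B" "\<forall>h\<in>E. e \<subseteq> h \<longrightarrow> B \<subseteq> h" unfolding tin_def Fb_def by auto
    have "I_H V E e \<subseteq> B" using BI e(1,2) by simp
    moreover have "B \<subseteq> I_H V E e" unfolding I_H_def using e(3) BV by auto
    ultimately show "e \<in> {e\<in>T. I_H V E e = B}" using e(1) by auto
  qed
  have finB: "finite (tin T B)" using tb(2) by (simp add: tin_def)
  have FbT: "Fb \<subseteq> tin T B" unfolding Fb_def tin_def by blast
  have c1: "card {e\<in>T. I_H V E e = B} = card (tin T B) - card Fb"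
    unfolding good by (rule card_Diff_subset[OF finite_subset[OF FbT finB] FbT])
  have c2: "card (tin T B) + 1 = card B" by (rule conn_count[OF T BV Bne Bconn])
  have c3: "card Fb + nc B Fb = card B"
    by (rule forest_count[OF T _ BV]) (auto simp: Fb_def)
  define R where "R = two_section V E'"
  define K where "K x = {y\<in>V. (x, y) \<in> R\<^sup>*}" for x
  have Rsym: "sym R" unfolding R_def two_section_def sym_def by blast
  have RV: "(x, y) \<in> R \<Longrightarrow> x \<in> V \<and> y \<in> V" for x y unfolding R_def two_section_def by simp
  have Kcomp: "components V E' = K ` V" unfolding components_def K_def R_def by blast
  have Keq: "K y = K x" if "y \<in> K x" for x y
  proof -
    have xy: "(x, y) \<in> R\<^sup>*" using that unfolding K_def by simp
    then have yx: "(y, x) \<in> R\<^sup>*" using Rsym by (meson sym_rtrancl symD)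
    have "(y, z) \<in> R\<^sup>* \<longleftrightarrow> (x, z) \<in> R\<^sup>*" for z
    proof
      assume "(y, z) \<in> R\<^sup>*" then show "(x, z) \<in> R\<^sup>*" using xy by (rule rtrancl_trans[rotated])
    next
      assume "(x, z) \<in> R\<^sup>*" then show "(y, z) \<in> R\<^sup>*" using yx by (rule rtrancl_trans[rotated])
    qed
    then show ?thesis unfolding K_def by simp
  qed
  have Kself: "x \<in> K x" if "x \<in> V" for x using that unfolding K_def by simp
  have KV: "K x \<subseteq> V" for x unfolding K_def by blast
  have core: "K u \<inter> B = cls B Fb u" if uB: "u \<in> B" for u
  proof
    have uV: "u \<in> V" using uB BV by blast
    have adjR: "adj_on Fb B \<subseteq> R"
    proof
      fix pq assume "pq \<in> adj_on Fb B"
      then obtain p q where pq: "pq = (p, q)" "{p, q} \<in> Fb" "p \<in> B" "q \<in> B"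
        unfolding adj_on_def by blast
      then have pqT: "{p, q} \<in> T" unfolding Fb_def by blast
      have pq2: "p \<noteq> q" "p \<in> V" "q \<in> V" using tree_edge_distinct[OF T pqT] by simp_all
      obtain h where h: "h \<in> E" "{p, q} \<subseteq> h" "\<not> B \<subseteq> h" using pq(2) unfolding Fb_def by blast
      have hE': "h \<in> E'" using h unfolding E'_def edges_not_containing_def by simp
      have "p \<in> h" "q \<in> h" using h(2) by simp_all
      then show "pq \<in> R" unfolding R_def two_section_def pq(1) using pq2 hE' by blast
    qed
    show "cls B Fb u \<subseteq> K u \<inter> B"
    proof
      fix y assume "y \<in> cls B Fb u"
      then have y: "y \<in> B" "(u, y) \<in> (adj_on Fb B)\<^sup>*" unfolding cls_def by simp_all
      then have "(u, y) \<in> R\<^sup>*" using adjR rtrancl_mono by blast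
      then show "y \<in> K u \<inter> B" using y(1) BV unfolding K_def by blast
    qed
    define C where "C = K u"
    define Fam where "Fam = insert {u} {h \<in> E'. h \<inter> C \<noteq> {}}"
    have CV: "C \<subseteq> V" unfolding C_def by (rule KV)
    have uC: "u \<in> C" unfolding C_def using Kself[OF uV] .
    have famsub: "\<forall>X\<in>Fam. X \<subseteq> C \<and> induces_connected T X"
    proof
      fix X assume "X \<in> Fam"
      then consider "X = {u}" | "X \<in> E'" "X \<inter> C \<noteq> {}" unfolding Fam_def by blast
      then show "X \<subseteq> C \<and> induces_connected T X"
      proof cases
        case 1
        then show ?thesis using uC unfolding induces_connected_def by simp
      next
        case 2
        then have XE: "X \<in> E" unfolding E'_def edges_not_containing_def by simp
        then have XV: "X \<subseteq> V" using EV by simp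
        obtain w where w: "w \<in> X" "w \<in> C" using 2(2) by blast
        have "X \<subseteq> C"
        proof
          fix z assume z: "z \<in> X"
          show "z \<in> C"
          proof (cases "z = w")
            case True then show ?thesis using w by simp
          next
            case False
            then have "(w, z) \<in> R" unfolding R_def two_section_def using w(1) z XV 2(1) by blast
            moreover have "(u, w) \<in> R\<^sup>*" using w(2) unfolding C_def K_def by simp
            ultimately have "(u, z) \<in> R\<^sup>*" by simp
            then show ?thesis using z XV unfolding C_def K_def by blast
          qed
        qed
        then show ?thesis using XE Econn by simp
      qed
    qed
    have shsym: "sym ((share Fam)\<^sup>*)" using share_sym sym_rtrancl by blast
    have shu: "(u, x) \<in> (share Fam)\<^sup>*" if "x \<in> C" for x
    proof -
      have "(u, x) \<in> R\<^sup>*" using that unfolding C_def K_def by simp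
      then show ?thesis
      proof (induction rule: rtrancl_induct)
        case base then show ?case by simp
      next
        case (step x z)
        then obtain h where h: "h \<in> E'" "x \<in> h" "z \<in> h" unfolding R_def two_section_def by blast
        have "x \<in> V" using RV[OF step.hyps(2)] by simp
        then have "x \<in> C" using step.hyps(1) unfolding C_def K_def by simp
        then have "h \<in> Fam" using h unfolding Fam_def by blast
        then have "(x, z) \<in> share Fam" using h unfolding share_def by blast
        then show ?case using step.IH by simp
      qed
    qed
    have sh: "\<forall>x\<in>C. \<forall>y\<in>C. (x, y) \<in> (share Fam)\<^sup>*"
    proof (intro ballI)
      fix x y assume "x \<in> C" "y \<in> C"
      then have "(x, u) \<in> (share Fam)\<^sup>*" "(u, y) \<in> (share Fam)\<^sup>*"
        using shu shsym by (meson symD)+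
      then show "(x, y) \<in> (share Fam)\<^sup>*" by simp
    qed
    have Cconn: "induces_connected T C" by (rule union_conn_T[OF famsub sh])
    have CBne: "C \<inter> B \<noteq> {}" using uC uB by blast
    have CBconn: "induces_connected T (C \<inter> B)" by (rule inter_conn[OF T CV BV Cconn Bconn CBne])
    have adjsub: "adj_on T (C \<inter> B) \<subseteq> adj_on Fb B"
    proof
      fix pq assume "pq \<in> adj_on T (C \<inter> B)"
      then obtain p q where pq: "pq = (p, q)" "{p, q} \<in> T" "p \<in> C" "p \<in> B" "q \<in> C" "q \<in> B"
        unfolding adj_on_def by blast
      have pne: "p \<noteq> q" using tree_edge_distinct[OF T pq(2)] by simp
      have "{p, q} \<subseteq> C" using pq by simp
      then obtain X where X: "X \<in> Fam" "{p, q} \<subseteq> X" using union_edge[OF T CV famsub sh pq(2)] by blast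
      have "X \<noteq> {u}" using X(2) pne by auto
      then have "X \<in> E'" using X(1) unfolding Fam_def by blast
      then have "X \<in> E" "\<not> B \<subseteq> X" unfolding E'_def edges_not_containing_def by simp_all
      then have "{p, q} \<in> Fb" unfolding Fb_def using pq X(2) by blast
      then show "pq \<in> adj_on Fb B" unfolding adj_on_def using pq by simp
    qed
    show "K u \<inter> B \<subseteq> cls B Fb u"
    proof
      fix y assume "y \<in> K u \<inter> B"
      then have y: "y \<in> C \<inter> B" unfolding C_def by simp
      have "u \<in> C \<inter> B" using uC uB by simp
      then have "(u, y) \<in> (adj_on T (C \<inter> B))\<^sup>*" using CBconn y unfolding induces_connected_def by blast
      then have "(u, y) \<in> (adj_on Fb B)\<^sup>*" using adjsub rtrancl_mono by blast
      then show "y \<in> cls B Fb u" using y unfolding cls_def by simp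
    qed
  qed
  have Aeq: "A_of V E B = {C \<in> K ` V. C \<inter> B \<noteq> {}}"
    unfolding A_of_def Kcomp[unfolded E'_def] ..
  have bij: "bij_betw (\<lambda>C. C \<inter> B) (A_of V E B) (comps B Fb)"
    unfolding bij_betw_def
  proof
    show "inj_on (\<lambda>C. C \<inter> B) (A_of V E B)"
    proof (rule inj_onI)
      fix C D assume C: "C \<in> A_of V E B" and D: "D \<in> A_of V E B" and eq: "C \<inter> B = D \<inter> B"
      obtain x where x: "x \<in> V" "C = K x" using C Aeq by auto
      obtain y where y: "y \<in> V" "D = K y" using D Aeq by auto
      obtain u where u: "u \<in> C" "u \<in> B" using C Aeq by auto
      have "u \<in> D" using u eq by blast
      then show "C = D" using u(1) x y Keq by metis
    qed
    show "(\<lambda>C. C \<inter> B) ` A_of V E B = comps B Fb"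
    proof
      show "(\<lambda>C. C \<inter> B) ` A_of V E B \<subseteq> comps B Fb"
      proof
        fix Z assume "Z \<in> (\<lambda>C. C \<inter> B) ` A_of V E B"
        then obtain C where C: "C \<in> A_of V E B" "Z = C \<inter> B" by blast
        obtain x where x: "x \<in> V" "C = K x" using C(1) Aeq by auto
        obtain u where u: "u \<in> C" "u \<in> B" using C(1) Aeq by auto
        have "K u = C" using Keq u(1) x(2) by metis
        then have "Z = cls B Fb u" using core[OF u(2)] C(2) by simp
        then show "Z \<in> comps B Fb" unfolding comps_def using u(2) by blast
      qed
      show "comps B Fb \<subseteq> (\<lambda>C. C \<inter> B) ` A_of V E B"
      proof
        fix Z assume "Z \<in> comps B Fb"
        then obtain u where u: "u \<in> B" "Z = cls B Fb u" unfolding comps_def by blast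
        have uV: "u \<in> V" using u(1) BV by blast
        have "K u \<in> A_of V E B" unfolding Aeq using uV Kself[OF uV] u(1) by blast
        moreover have "Z = K u \<inter> B" using core[OF u(1)] u(2) by simp
        ultimately show "Z \<in> (\<lambda>C. C \<inter> B) ` A_of V E B" by blast
      qed
    qed
  qed
  have c4: "nc B Fb = alpha V E B"
    unfolding nc_def alpha_def using bij_betw_same_card[OF bij] by simp
  show ?thesis using c1 c2 c3 c4 by simp
qed

end
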